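(* Let $G$ be a finite group, $P$ a $p$-subgroup and $Q$ a $q$-subgroup of $G$ for two different primes $p$ and $q$, and assume $\Pr(P,Q)\ge\epsilon>0$. (1) If $P$ normalizes $Q$ and $p>(2/\epsilon)^{6/\epsilon}$, then $[P,Q]=1$. (2) If $p>(2/\epsilon)^{6/\epsilon}$, then $Q$ has a normal subgroup $Q_0$ such that $|Q:Q_0|\le\lfloor 2/\epsilon\rfloor!$ and $[P,Q_0]=1$.
   Context: For subsets $X,Y$ of a finite group, $\Pr(X,Y)=|\{(x,y)\in X\times Y: xy=yx\}|/(|X||Y|)$. *)

theory Defs
  imports Complex_Main "HOL-Computational_Algebra.Primes" "HOL-Algebra.Coset" "HOL-Algebra.Generated_Groups"
begin

definition commute_prob :: "('a, 'b) monoid_scheme \<Rightarrow> 'a set \<Rightarrow> 'a set \<Rightarrow> real" where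
  "commute_prob G X Y =
     real (card {(x, y). x \<in> X \<and> y \<in> Y \<and> x \<otimes>\<^bsub>G\<^esub> y = y \<otimes>\<^bsub>G\<^esub> x})
       / (real (card X) * real (card Y))"

definition p_subgroup :: "('a, 'b) monoid_scheme \<Rightarrow> nat \<Rightarrow> 'a set \<Rightarrow> bool" where
  "p_subgroup G p P \<longleftrightarrow> subgroup P G \<and> (\<exists>k. card P = p ^ k)"

definition comm_subgroup :: "('a, 'b) monoid_scheme \<Rightarrow> 'a set \<Rightarrow> 'a set \<Rightarrow> 'a set" where
  "comm_subgroup G P Q = generate G
     {x \<otimes>\<^bsub>G\<^esub> y \<otimes>\<^bsub>G\<^esub> inv\<^bsub>G\<^esub> x \<otimes>\<^bsub>G\<^esub> inv\<^bsub>G\<^esub> y | x y. x \<in> P \<and> y \<in> Q}"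

definition normalizes :: "('a, 'b) monoid_scheme \<Rightarrow> 'a set \<Rightarrow> 'a set \<Rightarrow> bool" where
  "normalizes G P Q \<longleftrightarrow> (\<forall>x\<in>P. (x <#\<^bsub>G\<^esub> Q) #>\<^bsub>G\<^esub> inv\<^bsub>G\<^esub> x = Q)"

end

theory Submission
  imports Defs "HOL-Algebra.Group_Action" "HOL-Algebra.Multiplicative_Group" "HOL-Combinatorics.Permutations"
begin

lemma pp_small: "prime (p::nat) \<Longrightarrow> d dvd p^k \<Longrightarrow> d < p \<Longrightarrow> d = 1"
proof -
  assume p: "prime p" and d: "d dvd p^k" and lt: "d < p"
  then obtain i where i: "i \<le> k" "d = p^i" using divides_primepow_nat by blast
  have "i = 0"
  proof (rule ccontr)
    assume "i \<noteq> 0"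
    then have "p^1 \<le> p^i" using p prime_ge_1_nat[OF p] by (intro power_increasing) simp_all
    then show False using i lt by simp
  qed
  then show ?thesis using i by simp
qed

lemma pp_proper: "prime (p::nat) \<Longrightarrow> d dvd p^k \<Longrightarrow> d < p^k \<Longrightarrow> d * p \<le> p^k"
proof -
  assume p: "prime p" and d: "d dvd p^k" and lt: "d < p^k"
  then obtain i where i: "i \<le> k" "d = p^i" using divides_primepow_nat by blast
  have "i < k" using i lt by (metis le_neq_implies_less less_irrefl)
  then have "p^(Suc i) \<le> p^k" using p by (meson Suc_leI power_increasing prime_ge_1_nat)
  then show ?thesis using i by (simp add: mult.commute)
qed

lemma (in group) centr_elem_subgroup:
  assumes "subgroup P G" "y \<in> carrier G"
  shows "subgroup {x\<in>P. x \<otimes> y = y \<otimes> x} G"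
proof (rule subgroupI)
  show "{x \<in> P. x \<otimes> y = y \<otimes> x} \<subseteq> carrier G" using assms subgroup.subset by blast
  show "{x \<in> P. x \<otimes> y = y \<otimes> x} \<noteq> {}" using assms subgroup.one_closed by fastforce
  fix a b assume a: "a \<in> {x \<in> P. x \<otimes> y = y \<otimes> x}" and b: "b \<in> {x \<in> P. x \<otimes> y = y \<otimes> x}"
  have ac: "a \<in> carrier G" "b \<in> carrier G" using a b assms subgroup.mem_carrier by auto
  show "inv a \<in> {x \<in> P. x \<otimes> y = y \<otimes> x}"
  proof -
    have "inv a \<otimes> y = inv a \<otimes> (y \<otimes> a) \<otimes> inv a" using ac assms by (simp add: m_assoc)
    also have "\<dots> = inv a \<otimes> (a \<otimes> y) \<otimes> inv a" using a by simp
    also have "\<dots> = y \<otimes> inv a" using ac assms by (simp add: m_assoc[symmetric])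
    finally show ?thesis using a assms subgroup.m_inv_closed by fastforce
  qed
  show "a \<otimes> b \<in> {x \<in> P. x \<otimes> y = y \<otimes> x}"
  proof -
    have "a \<otimes> b \<otimes> y = a \<otimes> (y \<otimes> b)" using a b ac assms by (simp add: m_assoc)
    also have "\<dots> = y \<otimes> (a \<otimes> b)" using a b ac assms by (simp add: m_assoc[symmetric])
    finally show ?thesis using a b assms subgroup.m_closed by fastforce
  qed
qed

lemma (in group) centr_subgroup:
  assumes "subgroup P G" "subgroup Q G"
  shows "subgroup {y\<in>Q. \<forall>x\<in>P. x \<otimes> y = y \<otimes> x} G"
proof (rule subgroupI)
  show "{y\<in>Q. \<forall>x\<in>P. x \<otimes> y = y \<otimes> x} \<subseteq> carrier G" using assms subgroup.subset by blast
  show "{y\<in>Q. \<forall>x\<in>P. x \<otimes> y = y \<otimes> x} \<noteq> {}" using assms subgroup.one_closed subgroup.mem_carrier by fastforce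
  fix a b assume a: "a \<in> {y\<in>Q. \<forall>x\<in>P. x \<otimes> y = y \<otimes> x}" and b: "b \<in> {y\<in>Q. \<forall>x\<in>P. x \<otimes> y = y \<otimes> x}"
  have ac: "a \<in> carrier G" "b \<in> carrier G" using a b assms subgroup.mem_carrier by auto
  show "inv a \<in> {y\<in>Q. \<forall>x\<in>P. x \<otimes> y = y \<otimes> x}"
  proof -
    have "x \<otimes> inv a = inv a \<otimes> x" if x: "x \<in> P" for x
    proof -
      have xc: "x \<in> carrier G" using x assms subgroup.mem_carrier by metis
      have "x \<otimes> inv a = inv a \<otimes> (a \<otimes> x) \<otimes> inv a" using ac xc by (simp add: m_assoc[symmetric])
      also have "\<dots> = inv a \<otimes> (x \<otimes> a) \<otimes> inv a" using a x by simp
      also have "\<dots> = inv a \<otimes> x" using ac xc by (simp add: m_assoc)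
      finally show ?thesis .
    qed
    then show ?thesis using a assms subgroup.m_inv_closed by fastforce
  qed
  show "a \<otimes> b \<in> {y\<in>Q. \<forall>x\<in>P. x \<otimes> y = y \<otimes> x}"
  proof -
    have "x \<otimes> (a \<otimes> b) = a \<otimes> b \<otimes> x" if x: "x \<in> P" for x
    proof -
      have xc: "x \<in> carrier G" using x assms subgroup.mem_carrier by metis
      have "x \<otimes> (a \<otimes> b) = a \<otimes> x \<otimes> b" using a x ac xc by (simp add: m_assoc[symmetric])
      also have "\<dots> = a \<otimes> b \<otimes> x" using b x ac xc by (simp add: m_assoc)
      finally show ?thesis .
    qed
    then show ?thesis using a b assms subgroup.m_closed by fastforce
  qed
qed

lemma (in group) sub_card_dvd:
  assumes "finite (carrier G)" "subgroup P G" "subgroup S G" "S \<subseteq> P"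
  shows "card S dvd card P"
proof -
  interpret H: group "G\<lparr>carrier := P\<rparr>" using subgroup.subgroup_is_group[OF assms(2)] is_group by blast
  have "subgroup S (G\<lparr>carrier := P\<rparr>)" using subgroup_incl assms by blast
  from H.lagrange[OF this] show ?thesis by (simp add: order_def) (metis dvd_triv_right)
qed

lemma (in group) pairs_card:
  assumes "finite P" "finite Q"
  shows "card {(x,y). x\<in>P \<and> y\<in>Q \<and> x \<otimes> y = y \<otimes> x} = (\<Sum>y\<in>Q. card {x\<in>P. x \<otimes> y = y \<otimes> x})"
proof -
  have "{(x,y). x\<in>P \<and> y\<in>Q \<and> x \<otimes> y = y \<otimes> x} = (\<lambda>(y,x). (x,y)) ` (SIGMA y:Q. {x\<in>P. x \<otimes> y = y \<otimes> x})"
    by auto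
  moreover have "inj_on (\<lambda>(y,x). (x,y)) (SIGMA y:Q. {x\<in>P. x \<otimes> y = y \<otimes> x})"
    by (auto simp: inj_on_def)
  ultimately have "card {(x,y). x\<in>P \<and> y\<in>Q \<and> x \<otimes> y = y \<otimes> x} = card (SIGMA y:Q. {x\<in>P. x \<otimes> y = y \<otimes> x})"
    by (simp add: card_image)
  also have "\<dots> = (\<Sum>y\<in>Q. card {x\<in>P. x \<otimes> y = y \<otimes> x})"
    using assms by (simp add: card_SigmaI)
  finally show ?thesis .
qed

lemma (in group) count_bound:
  assumes fin: "finite (carrier G)" and P: "subgroup P G" and Q: "subgroup Q G"
    and p: "prime p" and cP: "card P = p^k"
  shows "card {(x,y). x\<in>P \<and> y\<in>Q \<and> x \<otimes> y = y \<otimes> x} * p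
     \<le> card {y\<in>Q. \<forall>x\<in>P. x \<otimes> y = y \<otimes> x} * p * card P + card Q * card P"
proof -
  let ?C = "{y\<in>Q. \<forall>x\<in>P. x \<otimes> y = y \<otimes> x}"
  have fP: "finite P" and fQ: "finite Q" using fin P Q subgroup.subset finite_subset by metis+
  have each: "card {x\<in>P. x \<otimes> y = y \<otimes> x} * p \<le> (if y \<in> ?C then p * card P else 0) + card P"
    if y: "y \<in> Q" for y
  proof (cases "y \<in> ?C")
    case True
    then have "{x\<in>P. x \<otimes> y = y \<otimes> x} = P" by auto
    then show ?thesis using True by simp
  next
    case False
    let ?S = "{x\<in>P. x \<otimes> y = y \<otimes> x}"
    have yc: "y \<in> carrier G" using y Q subgroup.mem_carrier by metis
    have sS: "subgroup ?S G" using centr_elem_subgroup[OF P yc] .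
    have dvd: "card ?S dvd p^k" using sub_card_dvd[OF fin P sS] cP by auto
    have "?S \<subset> P" using False y by auto
    then have "card ?S < card P" using fP by (simp add: psubset_card_mono)
    then have "card ?S * p \<le> p^k" using pp_proper[OF p dvd] cP by simp
    then show ?thesis using False cP by simp
  qed
  have "card {(x,y). x\<in>P \<and> y\<in>Q \<and> x \<otimes> y = y \<otimes> x} * p = (\<Sum>y\<in>Q. card {x\<in>P. x \<otimes> y = y \<otimes> x} * p)"
    using pairs_card[OF fP fQ] by (simp add: sum_distrib_right)
  also have "\<dots> \<le> (\<Sum>y\<in>Q. (if y \<in> ?C then p * card P else 0) + card P)"
    using each by (rule sum_mono)
  also have "\<dots> = (\<Sum>y\<in>Q. (if y \<in> ?C then p * card P else 0)) + card Q * card P"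
    by (simp add: sum.distrib)
  also have "(\<Sum>y\<in>Q. (if y \<in> ?C then p * card P else 0)) = card ?C * p * card P"
  proof -
    have "(\<Sum>y\<in>Q. (if y \<in> ?C then p * card P else 0)) = (\<Sum>y\<in>?C. p * card P)"
      using fQ by (simp add: sum.If_cases Int_def)
    then show ?thesis by simp
  qed
  finally show ?thesis .
qed

lemma card_Bij_le:
  assumes "finite S"
  shows "card (Bij S) \<le> fact (card S)"
proof -
  let ?e = "\<lambda>f x. if x \<in> S then f x else x"
  have "?e ` Bij S \<subseteq> {p. p permutes S}"
  proof
    fix g assume "g \<in> ?e ` Bij S"
    then obtain f where f: "f \<in> Bij S" "g = ?e f" by blast
    have "bij_betw f S S" using f by (simp add: Bij_def)
    then have "bij_betw g S S" using f by (auto intro: bij_betw_cong[THEN iffD1])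
    then show "g \<in> {p. p permutes S}" using f by (auto intro!: bij_imp_permutes)
  qed
  moreover have "inj_on ?e (Bij S)"
  proof (rule inj_onI)
    fix f g assume "f \<in> Bij S" "g \<in> Bij S" "?e f = ?e g"
    then show "f = g"
      by (metis (no_types, lifting) Bij_imp_extensional extensionalityI)
  qed
  ultimately have "card (?e ` Bij S) \<le> card {p. p permutes S}"
    using assms by (intro card_mono finite_permutations)
  then have "card (Bij S) \<le> card {p. p permutes S}"
    using \<open>inj_on ?e (Bij S)\<close> by (simp add: card_image)
  then show ?thesis using card_permutations[OF refl assms] by simp
qed

lemma (in group) core_index0:
  assumes fin: "finite (carrier G)" and C: "subgroup C G"
  shows "\<exists>K. K \<lhd> G \<and> K \<subseteq> C \<and> order G div card K \<le> fact (card (rcosets C))"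
proof -
  let ?R = "rcosets C"
  define \<phi> where "\<phi> = (\<lambda>g. \<lambda>X\<in>?R. X #> inv g)"
  have Cs: "C \<subseteq> carrier G" using C subgroup.subset by blast
  have Rs: "X \<subseteq> carrier G" if "X \<in> ?R" for X using that Cs by (auto simp: RCOSETS_def r_coset_def)
  have Rc: "X #> g \<in> ?R" if "X \<in> ?R" "g \<in> carrier G" for X g
  proof -
    have "\<exists>a\<in>carrier G. X = C #> a" using that(1) by (simp add: RCOSETS_def)
    then obtain a where a: "a \<in> carrier G" "X = C #> a" by blast
    then have "X #> g = C #> (a \<otimes> g)" using Cs that(2) by (simp add: coset_mult_assoc)
    then show ?thesis using a that(2) Cs by (simp add: rcosetsI)
  qed
  have bk: "(X #> h) #> inv h = X" "(X #> inv h) #> h = X" if "X \<in> ?R" "h \<in> carrier G" for X h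
    using that Rs by (simp_all add: coset_mult_assoc)
  have Bij: "\<phi> g \<in> Bij ?R" if g: "g \<in> carrier G" for g
  proof -
    have "bij_betw (\<phi> g) ?R ?R"
      by (rule bij_betw_byWitness[where f'="\<lambda>X. X #> g"])
         (use g Rc bk in \<open>auto simp: \<phi>_def\<close>)
    then show ?thesis by (simp add: Bij_def \<phi>_def)
  qed
  have hom: "group_hom G (BijGroup ?R) \<phi>"
  proof (rule group_hom.intro)
    show "group G" by (rule is_group)
    show "group (BijGroup ?R)" by (rule group_BijGroup)
    show "group_hom_axioms G (BijGroup ?R) \<phi>"
    proof
      show "\<phi> \<in> hom G (BijGroup ?R)"
      proof (rule homI)
        fix g assume "g \<in> carrier G" then show "\<phi> g \<in> carrier (BijGroup ?R)"
          using Bij by (simp add: BijGroup_def)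
      next
        fix g h assume g: "g \<in> carrier G" and h: "h \<in> carrier G"
        have "\<phi> (g \<otimes> h) = compose ?R (\<phi> g) (\<phi> h)"
        proof (rule ext)
          fix X show "\<phi> (g \<otimes> h) X = compose ?R (\<phi> g) (\<phi> h) X"
          proof (cases "X \<in> ?R")
            case True
            then show ?thesis using g h Rc Rs
              by (simp add: \<phi>_def compose_def coset_mult_assoc inv_mult_group)
          next
            case False then show ?thesis by (simp add: \<phi>_def compose_def)
          qed
        qed
        then show "\<phi> (g \<otimes> h) = \<phi> g \<otimes>\<^bsub>BijGroup ?R\<^esub> \<phi> h"
          using Bij g h by (simp add: BijGroup_def)
      qed
    qed
  qed
  interpret hom: group_hom G "BijGroup ?R" \<phi> by (rule hom)
  let ?K = "kernel G (BijGroup ?R) \<phi>"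
  have nK: "?K \<lhd> G" by (rule hom.normal_kernel)
  have KC: "?K \<subseteq> C"
  proof
    fix g assume g: "g \<in> ?K"
    then have gc: "g \<in> carrier G" and e: "\<phi> g = (\<lambda>X\<in>?R. X)"
      by (auto simp: kernel_def BijGroup_def)
    have CR: "C \<in> ?R" using Cs by (metis coset_mult_one one_closed rcosetsI)
    have "C #> inv g = C" using fun_cong[OF e, of C] CR by (simp add: \<phi>_def)
    then have "inv g \<in> C" using coset_join1 C gc by blast
    then show "g \<in> C" using C gc by (metis inv_inv subgroup.m_inv_closed)
  qed
  have fR: "finite ?R" using fin by (metis finite_Pow_iff finite_subset rcosets_subset_PowG C)
  have "card (rcosets ?K) \<le> card (Bij ?R)"
  proof -
    have "inj_on (\<lambda>X. the_elem (\<phi> ` X)) (carrier (G Mod ?K))" by (rule hom.FactGroup_inj_on)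
    moreover have "(\<lambda>X. the_elem (\<phi> ` X)) ` carrier (G Mod ?K) \<subseteq> Bij ?R"
      using hom.FactGroup_the_elem_mem by (auto simp: BijGroup_def)
    moreover have "finite (Bij ?R)"
    proof -
      have "Bij ?R \<subseteq> ?R \<rightarrow>\<^sub>E ?R" by (auto simp: Bij_def bij_betw_def PiE_def)
      then show ?thesis using fR by (meson finite_PiE finite_subset)
    qed
    ultimately show ?thesis by (metis card_inj_on_le FactGroup_def partial_object.select_convs(1))
  qed
  also have "\<dots> \<le> fact (card ?R)" using card_Bij_le[OF fR] .
  finally have le: "card (rcosets ?K) \<le> fact (card ?R)" .
  have lag: "card (rcosets ?K) * card ?K = order G"
    using lagrange[OF normal_imp_subgroup[OF nK]] .
  have "card ?K > 0"
    using fin hom.subgroup_kernel by (metis card_gt_0_iff empty_iff finite_subset subgroup.one_closed subgroup.subset)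
  then have "order G div card ?K = card (rcosets ?K)" using lag by (metis nonzero_mult_div_cancel_right less_irrefl)
  then show ?thesis using nK KC le by (intro exI[of _ ?K]) simp
qed

lemma (in group) linv_cancel:
  "x \<in> carrier G \<Longrightarrow> y \<in> carrier G \<Longrightarrow> inv x \<otimes> (x \<otimes> y) = y"
  by (simp add: m_assoc[symmetric])

lemma (in group) key_comm:
  assumes fin: "finite (carrier G)" and P: "subgroup P G" and Q: "subgroup Q G"
    and cop: "coprime (card P) (card Q)"
    and norm: "\<And>x y. x \<in> P \<Longrightarrow> y \<in> Q \<Longrightarrow> x \<otimes> y \<otimes> inv x \<in> Q"
    and x: "x \<in> P" and y: "y \<in> Q"
    and cC: "x \<otimes> y \<otimes> inv x \<otimes> inv y \<in> {y\<in>Q. \<forall>x\<in>P. x \<otimes> y = y \<otimes> x}"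
  shows "x \<otimes> y = y \<otimes> x"
proof -
  let ?C = "{y\<in>Q. \<forall>x\<in>P. x \<otimes> y = y \<otimes> x}"
  define g where "g = (\<lambda>z. z \<otimes> y \<otimes> inv z \<otimes> inv y)"
  define c where "c = g x"
  have sC: "subgroup ?C G" using centr_subgroup[OF P Q] .
  have xc: "x \<in> carrier G" and yc: "y \<in> carrier G" using x y P Q subgroup.mem_carrier by metis+
  have cC': "c \<in> ?C" using cC by (simp add: c_def g_def)
  have cc: "c \<in> carrier G" using xc yc by (simp add: c_def g_def)
  have ind: "g (x [^] i) = c [^] i \<and> c [^] i \<in> ?C" for i :: nat
  proof (induction i)
    case 0
    show ?case using yc sC subgroup.one_closed by (fastforce simp: g_def)
  next
    case (Suc i)
    let ?w = "x [^] i"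
    have wP: "?w \<in> P"
    proof -
      interpret H: group "G\<lparr>carrier := P\<rparr>" using subgroup.subgroup_is_group[OF P] is_group by blast
      have "x [^]\<^bsub>G\<lparr>carrier := P\<rparr>\<^esub> i \<in> carrier (G\<lparr>carrier := P\<rparr>)" using x by (intro H.nat_pow_closed) simp
      then show ?thesis by (simp add: nat_pow_consistent[symmetric])
    qed
    have wc: "?w \<in> carrier G" using xc by simp
    have gw: "g ?w = c [^] i" and gwC: "c [^] i \<in> ?C" using Suc by auto
    have gwc: "c [^] i \<in> carrier G" using cc by simp
    have comm: "x \<otimes> c [^] i = c [^] i \<otimes> x" using gwC x by blast
    have e0: "?w \<otimes> y \<otimes> inv ?w = (?w \<otimes> y \<otimes> inv ?w \<otimes> inv y) \<otimes> y"
      using wc yc by (simp add: m_assoc)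
    have e1: "?w \<otimes> y \<otimes> inv ?w = c [^] i \<otimes> y"
      using gw e0 by (simp add: g_def)
    have "g (x [^] Suc i) = g (x \<otimes> ?w)" using nat_pow_Suc2[OF xc, of i] by argo
    also have "\<dots> = x \<otimes> (?w \<otimes> y \<otimes> inv ?w) \<otimes> inv x \<otimes> inv y"
      using xc wc yc by (simp add: g_def m_assoc inv_mult_group)
    also have "\<dots> = x \<otimes> c [^] i \<otimes> y \<otimes> inv x \<otimes> inv y"
      using e1 xc yc gwc by (simp add: m_assoc)
    also have "\<dots> = c [^] i \<otimes> (x \<otimes> y \<otimes> inv x \<otimes> inv y)"
      using comm xc yc gwc by (simp add: m_assoc)
    also have "\<dots> = c [^] Suc i" using cc by (simp add: c_def g_def nat_pow_Suc)
    finally have A: "g (x [^] Suc i) = c [^] Suc i" .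
    have "c [^] i \<otimes> c \<in> ?C" using subgroup.m_closed[OF sC gwC cC'] .
    then have "c [^] Suc i \<in> ?C" by (simp add: nat_pow_Suc)
    then show ?case using A by simp
  qed
  have "x [^] card P = \<one>"
  proof -
    interpret H: group "G\<lparr>carrier := P\<rparr>" using subgroup.subgroup_is_group[OF P] is_group by blast
    have "x [^]\<^bsub>G\<lparr>carrier := P\<rparr>\<^esub> order (G\<lparr>carrier := P\<rparr>) = \<one>\<^bsub>G\<lparr>carrier := P\<rparr>\<^esub>"
      using H.pow_order_eq_1 x by simp
    then show ?thesis by (simp add: order_def nat_pow_consistent[symmetric])
  qed
  then have "c [^] card P = \<one>" using ind[of "card P"] yc by (simp add: g_def)
  then have d1: "ord c dvd card P" using pow_eq_id cc by blast
  have cQ: "c \<in> Q" using norm[OF x y] y Q by (simp add: c_def g_def subgroup.m_closed subgroup.m_inv_closed)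
  have "c [^] card Q = \<one>"
  proof -
    interpret H: group "G\<lparr>carrier := Q\<rparr>" using subgroup.subgroup_is_group[OF Q] is_group by blast
    have "c [^]\<^bsub>G\<lparr>carrier := Q\<rparr>\<^esub> order (G\<lparr>carrier := Q\<rparr>) = \<one>\<^bsub>G\<lparr>carrier := Q\<rparr>\<^esub>"
      using H.pow_order_eq_1 cQ by simp
    then show ?thesis by (simp add: order_def nat_pow_consistent[symmetric])
  qed
  then have d2: "ord c dvd card Q" using pow_eq_id cc by blast
  have "ord c = 1" using coprime_common_divisor[OF cop d1 d2] by simp
  then have "c = \<one>" using ord_eq_1 cc by blast
  then have "x \<otimes> y \<otimes> inv x \<otimes> inv y = \<one>" by (simp add: c_def g_def)
  moreover have "x \<otimes> y = (x \<otimes> y \<otimes> inv x \<otimes> inv y) \<otimes> (y \<otimes> x)"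
    using xc yc by (simp add: m_assoc linv_cancel)
  ultimately show ?thesis using xc yc by simp
qed

lemma (in group) lcanc:
  "x \<in> carrier G \<Longrightarrow> y \<in> carrier G \<Longrightarrow> z \<in> carrier G \<Longrightarrow> (x \<otimes> y = x \<otimes> z) = (y = z)"
  using Units_l_cancel[of x y z] by (simp add: Units_eq)

lemma (in group) conj_eq_iff:
  assumes a: "a \<in> carrier G" and b: "b \<in> carrier G" and y: "y \<in> carrier G"
  shows "a \<otimes> y \<otimes> inv a = b \<otimes> y \<otimes> inv b \<longleftrightarrow> (inv b \<otimes> a) \<otimes> y = y \<otimes> (inv b \<otimes> a)"
proof -
  let ?X = "a \<otimes> y \<otimes> inv a" and ?Y = "b \<otimes> y \<otimes> inv b"
  have Xc: "?X \<in> carrier G" and Yc: "?Y \<in> carrier G" using assms by simp_all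
  have "?X = ?Y \<longleftrightarrow> inv b \<otimes> ?X = inv b \<otimes> ?Y" using lcanc[of "inv b" ?X ?Y] Xc Yc b by simp
  also have "\<dots> \<longleftrightarrow> inv b \<otimes> ?X \<otimes> a = inv b \<otimes> ?Y \<otimes> a"
    using right_cancel[of a "inv b \<otimes> ?X" "inv b \<otimes> ?Y"] Xc Yc a b by simp
  also have "inv b \<otimes> ?X \<otimes> a = (inv b \<otimes> a) \<otimes> y" using assms by (simp add: m_assoc)
  also have "inv b \<otimes> ?Y \<otimes> a = y \<otimes> (inv b \<otimes> a)" using assms by (simp add: m_assoc[symmetric])
  finally show ?thesis .
qed

lemma (in group) orbit_card:
  assumes fin: "finite (carrier G)" and P: "subgroup P G" and y: "y \<in> carrier G"
  shows "card P = card ((\<lambda>x. x \<otimes> y \<otimes> inv x) ` P) * card {x\<in>P. x \<otimes> y = y \<otimes> x}"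
proof -
  let ?psi = "\<lambda>x. x \<otimes> y \<otimes> inv x"
  let ?O = "?psi ` P"
  let ?S = "{x\<in>P. x \<otimes> y = y \<otimes> x}"
  let ?F = "\<lambda>z. {x\<in>P. ?psi x = z}"
  have fP: "finite P" using fin P subgroup.subset finite_subset by metis
  have Pc: "\<And>x. x \<in> P \<Longrightarrow> x \<in> carrier G" using P subgroup.mem_carrier by metis
  have "P = (\<Union>z\<in>?O. ?F z)" by auto
  moreover have "card (\<Union>z\<in>?O. ?F z) = (\<Sum>z\<in>?O. card (?F z))"
    by (rule card_UN_disjoint) (use fP in auto)
  ultimately have "card P = (\<Sum>z\<in>?O. card (?F z))" by simp
  also have "\<dots> = (\<Sum>z\<in>?O. card ?S)"
  proof (rule sum.cong[OF refl])
    fix z assume "z \<in> ?O"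
    then obtain x0 where x0: "x0 \<in> P" "z = ?psi x0" by blast
    have x0c: "x0 \<in> carrier G" using Pc x0 by blast
    have "?F z = (\<lambda>s. x0 \<otimes> s) ` ?S"
    proof
      show "?F z \<subseteq> (\<lambda>s. x0 \<otimes> s) ` ?S"
      proof
        fix x assume x: "x \<in> ?F z"
        then have xP: "x \<in> P" and xc: "x \<in> carrier G" using Pc by auto
        have "(inv x0 \<otimes> x) \<otimes> y = y \<otimes> (inv x0 \<otimes> x)" using x x0 conj_eq_iff[OF xc x0c y] by simp
        moreover have "inv x0 \<otimes> x \<in> P" using P x0 xP by (simp add: subgroup.m_closed subgroup.m_inv_closed)
        moreover have "x = x0 \<otimes> (inv x0 \<otimes> x)" using xc x0c by (simp add: m_assoc[symmetric])
        ultimately show "x \<in> (\<lambda>s. x0 \<otimes> s) ` ?S" by blast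
      qed
      show "(\<lambda>s. x0 \<otimes> s) ` ?S \<subseteq> ?F z"
      proof
        fix x assume "x \<in> (\<lambda>s. x0 \<otimes> s) ` ?S"
        then obtain s where s: "s \<in> P" "s \<otimes> y = y \<otimes> s" "x = x0 \<otimes> s" by blast
        have sc: "s \<in> carrier G" using Pc s by blast
        have xP: "x \<in> P" using s x0 P by (simp add: subgroup.m_closed)
        have "inv x0 \<otimes> x = s" using s x0c sc by (simp add: m_assoc[symmetric])
        then have "?psi x = ?psi x0" using conj_eq_iff[OF Pc[OF xP] x0c y] s by simp
        then show "x \<in> ?F z" using xP x0 by simp
      qed
    qed
    moreover have "inj_on (\<lambda>s. x0 \<otimes> s) ?S" using x0c Pc by (auto intro!: inj_onI)
    ultimately show "card (?F z) = card ?S" by (simp add: card_image)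
  qed
  also have "\<dots> = card ?O * card ?S" by simp
  finally show ?thesis .
qed

lemma (in group) part1:
  assumes fin: "finite (carrier G)" and P: "subgroup P G" and Q: "subgroup Q G"
    and p: "prime p" and cP: "card P = p^k"
    and cop: "coprime (card P) (card Q)"
    and norm: "\<And>x y. x \<in> P \<Longrightarrow> y \<in> Q \<Longrightarrow> x \<otimes> y \<otimes> inv x \<in> Q"
    and small: "card (rcosets\<^bsub>G\<lparr>carrier := Q\<rparr>\<^esub> {y\<in>Q. \<forall>x\<in>P. x \<otimes> y = y \<otimes> x}) < p"
    and x: "x \<in> P" and y: "y \<in> Q"
  shows "x \<otimes> y = y \<otimes> x"
proof -
  let ?C = "{y\<in>Q. \<forall>x\<in>P. x \<otimes> y = y \<otimes> x}"
  let ?R = "rcosets\<^bsub>G\<lparr>carrier := Q\<rparr>\<^esub> ?C"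
  let ?psi = "\<lambda>x. x \<otimes> y \<otimes> inv x"
  let ?O = "?psi ` P"
  let ?S = "{x\<in>P. x \<otimes> y = y \<otimes> x}"
  have Pc: "\<And>x. x \<in> P \<Longrightarrow> x \<in> carrier G" using P subgroup.mem_carrier by metis
  have Qc: "\<And>x. x \<in> Q \<Longrightarrow> x \<in> carrier G" using Q subgroup.mem_carrier by metis
  have yc: "y \<in> carrier G" using Qc y by blast
  have sC: "subgroup ?C G" using centr_subgroup[OF P Q] .
  have fP: "finite P" using fin P subgroup.subset finite_subset by metis
  have fQ: "finite Q" using fin Q subgroup.subset finite_subset by metis
  have fR: "finite ?R" using fQ by (simp add: RCOSETS_def)
  have OQ: "?O \<subseteq> Q" using norm y by blast
  have inj: "inj_on (\<lambda>z. ?C #> z) ?O"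
  proof (rule inj_onI)
    fix z1 z2 assume z1: "z1 \<in> ?O" and z2: "z2 \<in> ?O" and eq: "?C #> z1 = ?C #> z2"
    obtain x1 where x1: "x1 \<in> P" "z1 = ?psi x1" using z1 by blast
    obtain x2 where x2: "x2 \<in> P" "z2 = ?psi x2" using z2 by blast
    have x1c: "x1 \<in> carrier G" and x2c: "x2 \<in> carrier G" using x1 x2 Pc by auto
    have z1c: "z1 \<in> carrier G" and z2c: "z2 \<in> carrier G" using z1 z2 OQ Qc by auto
    have "z1 \<in> ?C #> z2" using rcos_self[OF z1c sC] by (simp only: eq)
    then have "\<exists>c\<in>?C. z1 = c \<otimes> z2" unfolding r_coset_def by (simp only: UN_iff singleton_iff)
    then obtain c where c: "c \<in> ?C" "z1 = c \<otimes> z2" by (rule bexE)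
    have cc: "c \<in> carrier G" using subgroup.mem_carrier[OF sC c(1)] .
    have czz: "z1 \<otimes> inv z2 = c" unfolding c(2) using cc z2c by (simp add: m_assoc)
    have cx2: "x2 \<otimes> c = c \<otimes> x2" using c(1) x2(1) by blast
    let ?x = "inv x2 \<otimes> x1"
    have xP: "?x \<in> P" using P x1 x2 by (simp add: subgroup.m_closed subgroup.m_inv_closed)
    have xc: "?x \<in> carrier G" using Pc xP by blast
    have "?x \<otimes> y \<otimes> inv ?x \<otimes> inv y = inv x2 \<otimes> (z1 \<otimes> inv z2) \<otimes> x2"
      unfolding x1(2) x2(2) using x1c x2c yc by (simp add: m_assoc inv_mult_group)
    also have "\<dots> = inv x2 \<otimes> c \<otimes> x2" by (simp only: czz)
    also have "\<dots> = inv x2 \<otimes> (c \<otimes> x2)" using x2c cc by (simp only: m_assoc inv_closed)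
    also have "c \<otimes> x2 = x2 \<otimes> c" by (rule cx2[symmetric])
    also have "inv x2 \<otimes> (x2 \<otimes> c) = c" using x2c cc by (rule linv_cancel)
    finally have "?x \<otimes> y \<otimes> inv ?x \<otimes> inv y \<in> ?C" using c(1) by (simp only:)
    then have "?x \<otimes> y = y \<otimes> ?x" using key_comm[OF fin P Q cop norm xP y] by blast
    then show "z1 = z2" using conj_eq_iff[OF x1c x2c yc] x1 x2 by simp
  qed
  have "(\<lambda>z. ?C #> z) ` ?O \<subseteq> ?R" using OQ by (auto simp: RCOSETS_def r_coset_def)
  then have "card ((\<lambda>z. ?C #> z) ` ?O) \<le> card ?R" by (rule card_mono[OF fR])
  then have "card ?O \<le> card ?R" using inj by (simp add: card_image)
  then have Olt: "card ?O < p" using small by simp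
  have Seq: "?S = P"
  proof (rule ccontr)
    assume ne: "?S \<noteq> P"
    have sS: "subgroup ?S G" using centr_elem_subgroup[OF P yc] .
    have dvd: "card ?S dvd p^k" using sub_card_dvd[OF fin P sS] cP by auto
    have "?S \<subset> P" using ne by auto
    then have "card ?S < card P" using fP by (simp add: psubset_card_mono)
    then have "card ?S * p \<le> card P" using pp_proper[OF p dvd] cP by simp
    also have "\<dots> = card ?O * card ?S" using orbit_card[OF fin P yc] .
    finally have "card ?S * p \<le> card ?S * card ?O" by (simp add: mult.commute)
    moreover have "card ?S > 0" using sS fP
      by (metis (no_types, lifting) card_gt_0_iff empty_iff finite_subset mem_Collect_eq subgroup.one_closed subsetI)
    ultimately have "p \<le> card ?O" by simp
    then show False using Olt by simp
  qed
  then show ?thesis using x by blast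
qed

lemma (in group) gen_trivial:
  assumes "S \<subseteq> {\<one>}" shows "generate G S = {\<one>}"
proof
  show "generate G S \<subseteq> {\<one>}" using generate_subgroup_incl[OF assms triv_subgroup] .
  show "{\<one>} \<subseteq> generate G S" by (simp add: generate.one)
qed

lemma (in group) comm_trivial:
  assumes "\<And>x y. x \<in> P \<Longrightarrow> y \<in> Q \<Longrightarrow> x \<otimes> y = y \<otimes> x"
    and "P \<subseteq> carrier G" "Q \<subseteq> carrier G"
  shows "comm_subgroup G P Q = {\<one>}"
  unfolding comm_subgroup_def
proof (rule gen_trivial)
  show "{x \<otimes> y \<otimes> inv x \<otimes> inv y |x y. x \<in> P \<and> y \<in> Q} \<subseteq> {\<one>}"
  proof clarify
    fix x y assume xy: "x \<in> P" "y \<in> Q"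
    then have c: "x \<in> carrier G" "y \<in> carrier G" using assms by auto
    have "x \<otimes> y \<otimes> inv x \<otimes> inv y = y \<otimes> x \<otimes> inv x \<otimes> inv y" using assms(1)[OF xy] by simp
    also have "\<dots> = \<one>" using c by (simp add: m_assoc)
    finally show "x \<otimes> y \<otimes> inv x \<otimes> inv y = \<one>" .
  qed
qed

lemma real_bound:
  fixes \<epsilon> :: real and N cC cP cQ p n :: nat
  assumes eps: "\<epsilon> > 0" and cPpos: "cP > 0" and cCpos: "cC > 0" and cQpos: "cQ > 0"
    and pr: "\<epsilon> \<le> real N / (real cP * real cQ)"
    and cnt: "N * p \<le> cC * p * cP + cQ * cP"
    and lag: "n * cC = cQ"
    and pbig: "real p > 2 / \<epsilon>"
  shows "real n \<le> 2 / \<epsilon>"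
proof -
  have "\<epsilon> * (real cP * real cQ) \<le> real N" using pr cPpos cQpos by (simp add: field_simps)
  then have "\<epsilon> * (real cP * real cQ) * p \<le> real N * p" by (simp add: mult_right_mono)
  also have "\<dots> \<le> real cC * p * cP + real cQ * cP" using cnt by (metis of_nat_add of_nat_le_iff of_nat_mult)
  finally have A: "\<epsilon> * (real cP * real cQ) * p \<le> real cC * p * cP + real cQ * cP" .
  then have B: "\<epsilon> * real cQ * p \<le> real cC * p + real cQ" using cPpos
    by (smt (verit, ccfv_SIG) distrib_right mult.commute mult.left_commute mult_le_cancel_left_pos of_nat_0_less_iff)
  have lagr: "real cQ = real n * real cC" using lag by (metis of_nat_mult)
  then have "\<epsilon> * real n * p \<le> p + real n" using B cCpos
    by (smt (verit, ccfv_SIG) distrib_right mult.commute mult.left_commute mult_le_cancel_left_pos of_nat_0_less_iff)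
  moreover have "\<epsilon> * p > 2" using pbig eps by (simp add: field_simps)
  ultimately have "real n * (\<epsilon> * p - 1) \<le> p" by (simp add: algebra_simps)
  moreover have "real n * (\<epsilon> * p - 1) \<ge> real n * (\<epsilon> * p / 2)" if "real n \<ge> 0"
    using \<open>\<epsilon> * p > 2\<close> by (intro mult_left_mono) simp_all
  ultimately have "real n * (\<epsilon> * p / 2) \<le> p" by simp
  moreover have "p > 0" using pbig eps by (smt (verit) divide_pos_pos of_nat_0_less_iff)
  ultimately have "real n * \<epsilon> \<le> 2" by (simp add: field_simps)
  then show "real n \<le> 2 / \<epsilon>" using eps by (simp add: field_simps)
qed

theorem lemma2p10:
  fixes G :: "('a, 'b) monoid_scheme" and P Q :: "'a set" and p q :: nat and \<epsilon> :: real
  assumes "group G" and "finite (carrier G)"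
    and "prime p" and "prime q" and "p \<noteq> q"
    and "p_subgroup G p P" and "p_subgroup G q Q"
    and "\<epsilon> > 0" and "commute_prob G P Q \<ge> \<epsilon>"
  shows "(normalizes G P Q \<and> real p > (2 / \<epsilon>) powr (6 / \<epsilon>)
            \<longrightarrow> comm_subgroup G P Q = {\<one>\<^bsub>G\<^esub>})
       \<and> (real p > (2 / \<epsilon>) powr (6 / \<epsilon>)
            \<longrightarrow> (\<exists>Q0. Q0 \<lhd> G\<lparr>carrier := Q\<rparr>
                   \<and> card Q div card Q0 \<le> fact (nat \<lfloor>2 / \<epsilon>\<rfloor>)
                   \<and> comm_subgroup G P Q0 = {\<one>\<^bsub>G\<^esub>}))"
proof -
  interpret group G by (rule assms(1))
  have fin: "finite (carrier G)" by (rule assms(2))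
  obtain k where P: "subgroup P G" and cP: "card P = p^k" using assms(6) by (auto simp: p_subgroup_def)
  obtain m where Q: "subgroup Q G" and cQ: "card Q = q^m" using assms(7) by (auto simp: p_subgroup_def)
  have cop: "coprime (card P) (card Q)" using cP cQ primes_coprime[OF assms(3-5)] by simp
  let ?C = "{y\<in>Q. \<forall>x\<in>P. x \<otimes>\<^bsub>G\<^esub> y = y \<otimes>\<^bsub>G\<^esub> x}"
  let ?HQ = "G\<lparr>carrier := Q\<rparr>"
  let ?R = "rcosets\<^bsub>?HQ\<^esub> ?C"
  let ?N = "card {(x,y). x\<in>P \<and> y\<in>Q \<and> x \<otimes>\<^bsub>G\<^esub> y = y \<otimes>\<^bsub>G\<^esub> x}"
  interpret HQ: group ?HQ using subgroup.subgroup_is_group[OF Q] is_group by blast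
  have sC: "subgroup ?C G" using centr_subgroup[OF P Q] .
  have sCH: "subgroup ?C ?HQ" using subgroup_incl[OF sC Q] by blast
  have fP: "finite P" using finite_subset[OF subgroup.subset[OF P] fin] .
  have fQ: "finite Q" using finite_subset[OF subgroup.subset[OF Q] fin] .
  have fC: "finite ?C" by (rule finite_subset[OF _ fQ]) blast
  have lag: "card ?R * card ?C = card Q" using HQ.lagrange[OF sCH] by (simp add: order_def)
  have cPpos: "card P > 0" using fP subgroup.one_closed[OF P] by (subst card_gt_0_iff) blast
  have cCpos: "card ?C > 0" using fC subgroup.one_closed[OF sC] by (subst card_gt_0_iff) blast
  have cQpos: "card Q > 0" using fQ subgroup.one_closed[OF Q] by (subst card_gt_0_iff) blast
  have pr: "\<epsilon> \<le> real ?N / (real (card P) * real (card Q))"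
    using assms(9) by (simp add: commute_prob_def)
  have cnt: "?N * p \<le> card ?C * p * card P + card Q * card P"
    using count_bound[OF fin P Q assms(3) cP] .
  have Nle: "?N \<le> card P * card Q"
  proof -
    have "{(x,y). x\<in>P \<and> y\<in>Q \<and> x \<otimes>\<^bsub>G\<^esub> y = y \<otimes>\<^bsub>G\<^esub> x} \<subseteq> P \<times> Q" by auto
    then have "?N \<le> card (P \<times> Q)" by (rule card_mono[OF finite_cartesian_product[OF fP fQ]])
    then show ?thesis by (simp add: card_cartesian_product)
  qed
  have eps1: "\<epsilon> \<le> 1"
  proof -
    have r: "real ?N \<le> real (card P) * real (card Q)" using Nle
      by (simp only: of_nat_mult[symmetric] of_nat_le_iff)
    have "real (card P) * real (card Q) > 0" using cPpos cQpos by simp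
    then have "real ?N / (real (card P) * real (card Q)) \<le> 1"
      using r by (simp only: divide_le_eq_1) simp
    then show ?thesis using pr by linarith
  qed
  have big: "real p > (2 / \<epsilon>) powr (6 / \<epsilon>) \<Longrightarrow> real p > 2 / \<epsilon>"
  proof -
    assume a: "real p > (2 / \<epsilon>) powr (6 / \<epsilon>)"
    have "2 / \<epsilon> \<ge> 1" using eps1 assms(8) by (simp add: field_simps)
    moreover have "6 / \<epsilon> \<ge> 1" using eps1 assms(8) by (simp add: field_simps)
    ultimately have "(2 / \<epsilon>) powr 1 \<le> (2 / \<epsilon>) powr (6 / \<epsilon>)" by (intro powr_mono) simp_all
    then show ?thesis using a assms(8) by simp
  qed
  have nb: "real (card ?R) \<le> 2 / \<epsilon>" if "real p > 2 / \<epsilon>"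
    using real_bound[OF assms(8) cPpos cCpos cQpos pr cnt lag that] .
  show ?thesis
  proof (intro conjI impI)
    assume a: "normalizes G P Q \<and> real p > (2 / \<epsilon>) powr (6 / \<epsilon>)"
    have pb: "real p > 2 / \<epsilon>" using big a by blast
    have small: "card ?R < p" using nb[OF pb] pb by linarith
    have norm: "x \<otimes>\<^bsub>G\<^esub> y \<otimes>\<^bsub>G\<^esub> inv\<^bsub>G\<^esub> x \<in> Q" if x: "x \<in> P" and y: "y \<in> Q" for x y
    proof -
      have "(x <#\<^bsub>G\<^esub> Q) #>\<^bsub>G\<^esub> inv\<^bsub>G\<^esub> x = Q" using a x by (simp add: normalizes_def)
      moreover have "x \<otimes>\<^bsub>G\<^esub> y \<otimes>\<^bsub>G\<^esub> inv\<^bsub>G\<^esub> x \<in> (x <#\<^bsub>G\<^esub> Q) #>\<^bsub>G\<^esub> inv\<^bsub>G\<^esub> x" using y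
        by (auto simp: l_coset_def r_coset_def)
      ultimately show ?thesis by simp
    qed
    show "comm_subgroup G P Q = {\<one>\<^bsub>G\<^esub>}"
    proof (rule comm_trivial)
      show "\<And>x y. x \<in> P \<Longrightarrow> y \<in> Q \<Longrightarrow> x \<otimes>\<^bsub>G\<^esub> y = y \<otimes>\<^bsub>G\<^esub> x"
        by (rule part1[OF fin P Q assms(3) cP cop norm small])
      show "P \<subseteq> carrier G" by (rule subgroup.subset[OF P])
      show "Q \<subseteq> carrier G" by (rule subgroup.subset[OF Q])
    qed
  next
    assume a: "real p > (2 / \<epsilon>) powr (6 / \<epsilon>)"
    have pb: "real p > 2 / \<epsilon>" using big a by blast
    have nfl: "card ?R \<le> nat \<lfloor>2 / \<epsilon>\<rfloor>" using nb[OF pb]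
      by (rule le_nat_floor)
    have ex: "\<exists>K. K \<lhd> ?HQ \<and> K \<subseteq> ?C \<and> order ?HQ div card K \<le> fact (card ?R)"
      by (rule HQ.core_index0[OF _ sCH]) (simp add: fQ)
    then obtain K where K: "K \<lhd> ?HQ" "K \<subseteq> ?C" "order ?HQ div card K \<le> fact (card ?R)"
      by blast
    have "card Q div card K \<le> fact (nat \<lfloor>2 / \<epsilon>\<rfloor>)"
    proof -
      have "card Q div card K \<le> fact (card ?R)" using K(3) by (simp add: order_def)
      also have "(fact (card ?R) :: nat) \<le> fact (nat \<lfloor>2 / \<epsilon>\<rfloor>)" by (rule fact_mono[OF nfl])
      finally show ?thesis .
    qed
    moreover have "comm_subgroup G P K = {\<one>\<^bsub>G\<^esub>}"
    proof (rule comm_trivial)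
      show "\<And>x y. x \<in> P \<Longrightarrow> y \<in> K \<Longrightarrow> x \<otimes>\<^bsub>G\<^esub> y = y \<otimes>\<^bsub>G\<^esub> x" using K(2) by blast
      show "P \<subseteq> carrier G" by (rule subgroup.subset[OF P])
      show "K \<subseteq> carrier G" using K(2) subgroup.subset[OF Q] by blast
    qed
    ultimately show "\<exists>Q0. Q0 \<lhd> ?HQ \<and> card Q div card Q0 \<le> fact (nat \<lfloor>2 / \<epsilon>\<rfloor>) \<and> comm_subgroup G P Q0 = {\<one>\<^bsub>G\<^esub>}"
      using K(1) by blast
  qed
qed

end
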